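(* Let $n,k\ge 1$ be integers, let $\mathcal{D}$ be a set, and let $h_1,\dots,h_k:\mathcal{D}\to\{0,1\}$ be indicator functions such that $\sum_{j=1}^k h_j(d)=1$ for all $d\in\mathcal{D}$ (so each data point belongs to exactly one class). Let $\alpha\in(0,\frac1k]$ and let $X=(D_1,\dots,D_n)$ be a random database whose entries $D_1,\dots,D_n$ are independent (not necessarily identically distributed) and satisfy $P_{D_i}(\{d\in\mathcal{D}: h_j(d)=1\})\ge\alpha$ for all $i\in[n]$ and $j\in[k]$. Let $b>0$ and let $N_1,\dots,N_k$ be i.i.d. Laplace random variables with mean $0$ and scale $b$ (density $\frac{1}{2b}e^{-|t|/b}$), independent of $X$. Define the output $Y^k=(Y_1,\dots,Y_k)$ by $$Y_j=\sum_{i=1}^n h_j(D_i)+N_j,\qquad j\in[k].$$ Then for every $i\in[n]$ and every $y^k\in\mathbb{R}^k$, $$\ell(D_i\to y^k)\le \frac{2}{b}-\log\Big(1-\alpha+\alpha\exp\big(\tfrac{2}{b}\big)\Big),$$ where $\ell(D_i\to y^k)=\log\sup_{d\in\mathcal{D}}\frac{M_{Y\mid D_i}(y^k\mid d)}{M_Y(y^k)}$, with $M_{Y\mid D_i}(\cdot\mid d)$ the conditional density of $Y^k$ given $D_i=d$ and $M_Y$ the marginal density of $Y^k$.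
   Context: $\log$ denotes the natural logarithm and $[n]=\{1,\dots,n\}$. The quantity $\ell(D_i\to y^k)$ is the pointwise maximal leakage from the $i$-th record $D_i$ to the outcome $y^k$ of the mechanism; the densities involved are with respect to Lebesgue measure on $\mathbb{R}^k$, with the randomness of the other records $D_{i'}$, $i'\ne i$, and of the noise integrated out. *)

theory Defs
  imports "HOL-Probability.Probability"
begin

definition laplace_density :: "real \<Rightarrow> real \<Rightarrow> real" where
  "laplace_density b t = exp (- \<bar>t\<bar> / b) / (2 * b)"

text \<open>Conditional density of the output Y^k = (Y_1,...,Y_k) at y given D_i = d:
  the other records (independent, D_i' distributed as M i') and the i.i.d. Laplace
  noise are integrated out.\<close>
definition cond_density ::
  "nat \<Rightarrow> nat \<Rightarrow> (nat \<Rightarrow> 'd measure) \<Rightarrow> (nat \<Rightarrow> 'd \<Rightarrow> real) \<Rightarrow> real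
    \<Rightarrow> nat \<Rightarrow> (nat \<Rightarrow> real) \<Rightarrow> 'd \<Rightarrow> real" where
  "cond_density n k M h b i y d =
     (\<integral>x. (\<Prod>j\<in>{1..k}. laplace_density b
              (y j - (h j d + (\<Sum>i'\<in>{1..n} - {i}. h j (x i')))))
        \<partial>(PiM ({1..n} - {i}) M))"

definition marginal_density ::
  "nat \<Rightarrow> nat \<Rightarrow> (nat \<Rightarrow> 'd measure) \<Rightarrow> (nat \<Rightarrow> 'd \<Rightarrow> real) \<Rightarrow> real
    \<Rightarrow> (nat \<Rightarrow> real) \<Rightarrow> real" where
  "marginal_density n k M h b y =
     (\<integral>x. (\<Prod>j\<in>{1..k}. laplace_density b (y j - (\<Sum>i'\<in>{1..n}. h j (x i'))))
        \<partial>(PiM {1..n} M))"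

definition pml_leakage ::
  "nat \<Rightarrow> nat \<Rightarrow> (nat \<Rightarrow> 'd measure) \<Rightarrow> (nat \<Rightarrow> 'd \<Rightarrow> real) \<Rightarrow> real
    \<Rightarrow> 'd set \<Rightarrow> nat \<Rightarrow> (nat \<Rightarrow> real) \<Rightarrow> real" where
  "pml_leakage n k M h b D i y =
     ln (SUP d\<in>D. cond_density n k M h b i y d / marginal_density n k M h b y)"

end

theory Submission
  imports Defs
begin

lemma lap_pos: "b > 0 \<Longrightarrow> laplace_density b t > 0"
  unfolding laplace_density_def by simp

lemma lap_upper: "b > 0 \<Longrightarrow> laplace_density b t \<le> 1 / (2 * b)"
  unfolding laplace_density_def by (simp add: divide_right_mono)

lemma lap_shift:
  assumes "b > 0"
  shows "laplace_density b (a - c) \<ge> laplace_density b a * exp (- \<bar>c\<bar> / b)"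
proof -
  have "- \<bar>a\<bar> / b + - \<bar>c\<bar> / b \<le> - \<bar>a - c\<bar> / b"
    using assms by (auto simp: divide_simps)
  hence "exp (- \<bar>a\<bar> / b) * exp (- \<bar>c\<bar> / b) \<le> exp (- \<bar>a - c\<bar> / b)"
    by (simp add: exp_add[symmetric])
  thus ?thesis using assms unfolding laplace_density_def
    by (simp add: divide_simps)
qed

lemma lap_lower:
  assumes "b > 0" "\<bar>t\<bar> \<le> B"
  shows "laplace_density b t \<ge> exp (- B / b) / (2 * b)"
  unfolding laplace_density_def using assms
  by (intro divide_right_mono) (auto simp: divide_simps)

lemma lap_meas[measurable]: "laplace_density b \<in> borel_measurable borel"
  unfolding laplace_density_def by measurable

lemma class_eq:
  fixes hz hd :: "nat \<Rightarrow> real"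
  assumes "finite K" "\<forall>j\<in>K. hz j \<in> {0,1}" "\<forall>j\<in>K. hd j \<in> {0,1}"
    "sum hz K = 1" "sum hd K = 1" "j1 \<in> K" "hz j1 = 1" "hd j1 = 1"
  shows "\<forall>j\<in>K. hz j = hd j"
proof
  fix j assume j: "j \<in> K"
  have z0: "\<forall>j'\<in>K - {j1}. hz j' = 0"
  proof -
    have "sum hz K = hz j1 + sum hz (K - {j1})" using assms by (simp add: sum.remove)
    hence "sum hz (K - {j1}) = 0" using assms by simp
    moreover have "\<And>x. x \<in> K - {j1} \<Longrightarrow> 0 \<le> hz x" using assms by fastforce
    ultimately show ?thesis using sum_nonneg_eq_0_iff[of "K - {j1}" hz] assms(1) by blast
  qed
  have d0: "\<forall>j'\<in>K - {j1}. hd j' = 0"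
  proof -
    have "sum hd K = hd j1 + sum hd (K - {j1})" using assms by (simp add: sum.remove)
    hence "sum hd (K - {j1}) = 0" using assms by simp
    moreover have "\<And>x. x \<in> K - {j1} \<Longrightarrow> 0 \<le> hd x" using assms by fastforce
    ultimately show ?thesis using sum_nonneg_eq_0_iff[of "K - {j1}" hd] assms(1) by blast
  qed
  show "hz j = hd j" using z0 d0 j assms by (cases "j = j1") auto
qed

lemma sum_abs_diff:
  fixes hz hd :: "nat \<Rightarrow> real"
  assumes "\<forall>j\<in>K. hz j \<in> {0,1}" "\<forall>j\<in>K. hd j \<in> {0,1}"
    "sum hz K = 1" "sum hd K = 1"
  shows "(\<Sum>j\<in>K. \<bar>hz j - hd j\<bar>) \<le> 2"
proof -
  have "(\<Sum>j\<in>K. \<bar>hz j - hd j\<bar>) \<le> (\<Sum>j\<in>K. hz j + hd j)"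
    apply (intro sum_mono)
    subgoal for j using bspec[OF assms(1), of j] bspec[OF assms(2), of j] by auto
    done
  also have "\<dots> = 2" using assms by (simp add: sum.distrib)
  finally show ?thesis .
qed

lemma prod_shift:
  fixes a \<delta> :: "nat \<Rightarrow> real"
  assumes "b > 0" "(\<Sum>j\<in>K. \<bar>\<delta> j\<bar>) \<le> 2" "finite K"
  shows "(\<Prod>j\<in>K. laplace_density b (a j - \<delta> j)) \<ge>
         (\<Prod>j\<in>K. laplace_density b (a j)) * exp (- 2 / b)"
proof -
  have "(\<Prod>j\<in>K. laplace_density b (a j - \<delta> j)) \<ge>
        (\<Prod>j\<in>K. laplace_density b (a j) * exp (- \<bar>\<delta> j\<bar> / b))"
    using assms lap_pos[OF assms(1)] lap_shift[OF assms(1)]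
    by (intro prod_mono) (auto intro: less_imp_le)
  also have "(\<Prod>j\<in>K. laplace_density b (a j) * exp (- \<bar>\<delta> j\<bar> / b))
     = (\<Prod>j\<in>K. laplace_density b (a j)) * exp (\<Sum>j\<in>K. - \<bar>\<delta> j\<bar> / b)"
    using assms(3) by (simp only: prod.distrib exp_sum)
  also have "exp (\<Sum>j\<in>K. - \<bar>\<delta> j\<bar> / b) \<ge> exp (- 2 / b)"
  proof -
    have "(\<Sum>j\<in>K. - \<bar>\<delta> j\<bar> / b) = - (\<Sum>j\<in>K. \<bar>\<delta> j\<bar>) / b"
      by (simp add: sum_divide_distrib sum_negf)
    also have "\<dots> \<ge> - 2 / b" using assms by (simp add: divide_simps)
    finally show ?thesis by simp
  qed
  hence "(\<Prod>j\<in>K. laplace_density b (a j)) * exp (\<Sum>j\<in>K. - \<bar>\<delta> j\<bar> / b)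
      \<ge> (\<Prod>j\<in>K. laplace_density b (a j)) * exp (- 2 / b)"
    using lap_pos[OF assms(1)] by (intro mult_left_mono prod_nonneg) (auto intro: less_imp_le)
  finally show ?thesis by linarith
qed

theorem theorem1:
  fixes n k :: nat and D :: "'d set" and h :: "nat \<Rightarrow> 'd \<Rightarrow> real"
    and M :: "nat \<Rightarrow> 'd measure" and \<alpha> b :: real
  assumes "n \<ge> 1" and "k \<ge> 1"
    and h_ind: "\<And>j d. j \<in> {1..k} \<Longrightarrow> d \<in> D \<Longrightarrow> h j d \<in> {0, 1}"
    and h_part: "\<And>d. d \<in> D \<Longrightarrow> (\<Sum>j\<in>{1..k}. h j d) = 1"
    and prob: "\<And>i. i \<in> {1..n} \<Longrightarrow> prob_space (M i)"
    and space: "\<And>i. i \<in> {1..n} \<Longrightarrow> space (M i) = D"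
    and h_meas: "\<And>i j. i \<in> {1..n} \<Longrightarrow> j \<in> {1..k} \<Longrightarrow> h j \<in> borel_measurable (M i)"
    and alpha: "0 < \<alpha>" "\<alpha> \<le> 1 / real k"
    and class_prob: "\<And>i j. i \<in> {1..n} \<Longrightarrow> j \<in> {1..k} \<Longrightarrow>
                        measure (M i) {d \<in> D. h j d = 1} \<ge> \<alpha>"
    and "b > 0"
    and "i \<in> {1..n}"
  shows "pml_leakage n k M h b D i y \<le> 2 / b - ln (1 - \<alpha> + \<alpha> * exp (2 / b))"
proof -
  note bpos = \<open>b > 0\<close> and iin = \<open>i \<in> {1..n}\<close>
  define I where "I = {1..n} - {i}"
  have fin: "finite I" and iI: "i \<notin> I" and ins: "insert i I = {1..n}"
    using iin by (auto simp: I_def)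
  have cardI: "card I \<le> n" unfolding I_def
    by (metis card_Diff1_le card_atLeastAtMost diff_Suc_1 finite_atLeastAtMost le_trans order_refl)
  define M' where "M' = (\<lambda>j. if j \<in> {1..n} then M j else return (count_space UNIV) undefined)"
  have probM': "\<And>j. prob_space (M' j)" unfolding M'_def using prob
    by (auto intro: prob_space_return)
  interpret PS: product_sigma_finite M'
    unfolding product_sigma_finite_def using probM' prob_space_imp_sigma_finite by blast
  have MI: "PiM I M = PiM I M'" by (rule PiM_cong) (auto simp: M'_def I_def)
  have Mall: "PiM {1..n} M = PiM {1..n} M'" by (rule PiM_cong) (auto simp: M'_def)
  have Mi: "M' i = M i" using iin by (simp add: M'_def)
  have spM': "\<And>j. j \<in> {1..n} \<Longrightarrow> space (M' j) = D" using space by (simp add: M'_def)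
  have hmeas': "\<And>j i'. i' \<in> {1..n} \<Longrightarrow> j \<in> {1..k} \<Longrightarrow> h j \<in> borel_measurable (M' i')"
    using h_meas by (simp add: M'_def)
  have hcomp: "\<And>j i' J. i' \<in> J \<Longrightarrow> J \<subseteq> {1..n} \<Longrightarrow> j \<in> {1..k} \<Longrightarrow>
      (\<lambda>x. h j (x i')) \<in> borel_measurable (PiM J M')"
  proof -
    fix j i' J assume a: "i' \<in> J" "J \<subseteq> {1..n}" "j \<in> {1..k}"
    show "(\<lambda>x. h j (x i')) \<in> borel_measurable (PiM J M')"
      using measurable_compose[OF measurable_component_singleton[of i' J M'] hmeas'[of i' j]] a by auto
  qed
  interpret PI: prob_space "PiM I M'" by (rule prob_space_PiM) (use probM' in auto)
  interpret PA: prob_space "PiM {1..n} M'" by (rule prob_space_PiM) (use probM' in auto)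
  interpret Pi: prob_space "M i" using prob iin by auto
  define L where "L = laplace_density b"
  define S where "S x j = (\<Sum>i'\<in>I. h j (x i'))" for x j
  define G where "G z x = (\<Prod>j\<in>{1..k}. L (y j - (h j z + S x j)))" for z x
  define F where "F x = (\<Prod>j\<in>{1..k}. L (y j - (\<Sum>i'\<in>{1..n}. h j (x i'))))" for x
  have cond_eq: "\<And>d. cond_density n k M h b i y d = (\<integral>x. G d x \<partial>PiM I M')"
    unfolding cond_density_def G_def S_def L_def I_def[symmetric] MI by simp
  have marg_eq: "marginal_density n k M h b y = (\<integral>x. F x \<partial>PiM {1..n} M')"
    unfolding marginal_density_def F_def L_def Mall by simp
  have Lmeas: "L \<in> borel_measurable borel" unfolding L_def by (rule lap_meas)
  have Lpos: "\<And>t. L t > 0" unfolding L_def using lap_pos[OF bpos] by simp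
  have Lup: "\<And>t. L t \<le> 1 / (2 * b)" unfolding L_def using lap_upper[OF bpos] by simp
  have Smeas: "\<And>j. j \<in> {1..k} \<Longrightarrow> (\<lambda>x. S x j) \<in> borel_measurable (PiM I M')"
    unfolding S_def
    by (intro borel_measurable_sum hcomp) (auto simp: I_def)
  have Gmeas: "\<And>d. G d \<in> borel_measurable (PiM I M')"
    unfolding G_def
    by (intro borel_measurable_prod measurable_compose[OF _ Lmeas] borel_measurable_diff
        borel_measurable_add borel_measurable_const Smeas)
  have Gmeas_z: "\<And>x. (\<lambda>z. G z x) \<in> borel_measurable (M i)"
    unfolding G_def
    by (intro borel_measurable_prod measurable_compose[OF _ Lmeas] borel_measurable_diff
        borel_measurable_add borel_measurable_const h_meas iin)
  have Fmeas: "F \<in> borel_measurable (PiM {1..n} M')"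
    unfolding F_def
    by (intro borel_measurable_prod measurable_compose[OF _ Lmeas] borel_measurable_diff
        borel_measurable_const borel_measurable_sum hcomp) auto
  have Gpos: "\<And>z x. G z x > 0" unfolding G_def using Lpos by (simp add: prod_pos)
  have Fpos: "\<And>x. F x > 0" unfolding F_def using Lpos by (simp add: prod_pos)
  have Gup: "\<And>z x. G z x \<le> (1 / (2 * b)) ^ k"
  proof -
    fix z x
    have "G z x \<le> (\<Prod>j\<in>{1..k}. 1 / (2 * b))" unfolding G_def
      using Lpos Lup by (intro prod_mono) (auto intro: less_imp_le)
    thus "G z x \<le> (1 / (2 * b)) ^ k" by simp
  qed
  have Fup: "\<And>x. F x \<le> (1 / (2 * b)) ^ k"
  proof -
    fix x
    have "F x \<le> (\<Prod>j\<in>{1..k}. 1 / (2 * b))" unfolding F_def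
      using Lpos Lup by (intro prod_mono) (auto intro: less_imp_le)
    thus "F x \<le> (1 / (2 * b)) ^ k" by simp
  qed
  have Gint: "\<And>d. integrable (PiM I M') (G d)"
    by (rule PI.integrable_const_bound[where B="(1 / (2 * b)) ^ k"])
       (use Gpos Gup Gmeas in \<open>auto simp: less_imp_le\<close>)
  have Fint: "integrable (PiM {1..n} M') F"
    by (rule PA.integrable_const_bound[where B="(1 / (2 * b)) ^ k"])
       (use Fpos Fup Fmeas in \<open>auto simp: less_imp_le\<close>)
  define e where "e = exp (- 2 / b)"
  define c where "c = e + (1 - e) * \<alpha>"
  have e01: "0 < e" "e < 1" unfolding e_def using bpos by auto
  have cpos: "c > 0" unfolding c_def using e01 alpha by (simp add: add_pos_nonneg)
  define Cp where "Cp = (\<Prod>j\<in>{1..k}. exp (- (\<bar>y j\<bar> + 1 + real n) / b) / (2 * b))"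
  have Cp: "Cp > 0" unfolding Cp_def using bpos by (simp add: prod_pos)
  have cond_pos: "cond_density n k M h b i y d \<ge> Cp" if dD: "d \<in> D" for d
  proof -
    have "Cp \<le> G d x" if x: "x \<in> space (PiM I M')" for x
      unfolding Cp_def G_def L_def
    proof (intro prod_mono conjI)
      fix j assume j: "j \<in> {1..k}"
      show "0 \<le> exp (- (\<bar>y j\<bar> + 1 + real n) / b) / (2 * b)" using bpos by simp
      have xi: "\<And>i'. i' \<in> I \<Longrightarrow> x i' \<in> D"
        using x spM' by (auto simp: space_PiM PiE_iff I_def)
      have "\<bar>S x j\<bar> \<le> (\<Sum>i'\<in>I. 1)" unfolding S_def
        using h_ind[OF j] xi by (intro order.trans[OF sum_abs] sum_mono) fastforce
      also have "\<dots> \<le> n" using cardI by simp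
      finally have "\<bar>S x j\<bar> \<le> n" .
      moreover have "\<bar>h j d\<bar> \<le> 1" using h_ind[OF j dD] by auto
      ultimately have "\<bar>y j - (h j d + S x j)\<bar> \<le> \<bar>y j\<bar> + 1 + real n" by linarith
      thus "exp (- (\<bar>y j\<bar> + 1 + real n) / b) / (2 * b) \<le> laplace_density b (y j - (h j d + S x j))"
        by (rule lap_lower[OF bpos])
    qed
    hence "(\<integral>x. Cp \<partial>PiM I M') \<le> (\<integral>x. G d x \<partial>PiM I M')"
      by (intro integral_mono Gint) auto
    thus ?thesis unfolding cond_eq by (simp add: PI.prob_space)
  qed
  have key: "c * cond_density n k M h b i y d \<le> marginal_density n k M h b y" if dD: "d \<in> D" for d
  proof -
    obtain j1 where j1: "j1 \<in> {1..k}" "h j1 d = 1"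
    proof -
      have "\<exists>j\<in>{1..k}. h j d \<noteq> 0" using h_part[OF dD] by (metis sum.neutral zero_neq_one)
      thus ?thesis using that h_ind[OF _ dD] by blast
    qed
    define C where "C = h j1 -` {1} \<inter> space (M i)"
    have Csets: "C \<in> sets (M i)" unfolding C_def by (rule measurable_sets[OF h_meas[OF iin j1(1)]]) simp
    have Ceq: "C = {z \<in> D. h j1 z = 1}" unfolding C_def using space[OF iin] by auto
    have PC: "measure (M i) C \<ge> \<alpha>" using class_prob[OF iin j1(1)] Ceq by simp
    define w where "w z = e + (1 - e) * indicator C z" for z :: 'd
    have i1: "integrable (M i) (\<lambda>z. e)" by simp
    have i2: "integrable (M i) (\<lambda>z. (1 - e) * indicator C z)"
      using Csets Pi.emeasure_eq_measure[of C]
      by (auto intro!: integrable_mult_right integrable_real_indicator simp: less_top)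
    have wint: "integrable (M i) w" unfolding w_def
      using i1 i2 by (rule Bochner_Integration.integrable_add)
    have CS: "C \<inter> space (M i) = C" unfolding C_def by auto
    have wI: "(\<integral>z. w z \<partial>M i) = e + (1 - e) * measure (M i) C"
      unfolding w_def Bochner_Integration.integral_add[OF i1 i2]
      by (simp add: Pi.prob_space CS)
    have wc: "(\<integral>z. w z \<partial>M i) \<ge> c" unfolding wI c_def using PC e01
      by (intro add_left_mono mult_left_mono) auto
    have pw: "G z x \<ge> G d x * w z" if z: "z \<in> D" for z x
    proof -
      have hz: "\<forall>j\<in>{1..k}. h j z \<in> {0,1}" using h_ind z by blast
      have hd: "\<forall>j\<in>{1..k}. h j d \<in> {0,1}" using h_ind dD by blast
      show ?thesis
    proof (cases "z \<in> C")
      case True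
      hence "h j1 z = 1" using Ceq by auto
      hence "\<forall>j\<in>{1..k}. h j z = h j d"
        using class_eq[OF _ hz hd h_part[OF z] h_part[OF dD] j1(1) \<open>h j1 z = 1\<close> j1(2)] by simp
      hence "G z x = G d x" unfolding G_def by (intro prod.cong) auto
      thus ?thesis using True by (simp add: w_def)
    next
      case False
      have "G z x = (\<Prod>j\<in>{1..k}. laplace_density b ((y j - (h j d + S x j)) - (h j z - h j d)))"
        unfolding G_def L_def by (intro prod.cong) (auto simp: algebra_simps)
      also have "\<dots> \<ge> (\<Prod>j\<in>{1..k}. laplace_density b (y j - (h j d + S x j))) * exp (- 2 / b)"
        using sum_abs_diff[OF hz hd h_part[OF z] h_part[OF dD]]
        by (intro prod_shift bpos) auto
      finally show ?thesis using False by (simp add: w_def G_def L_def e_def)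
    qed
    qed
    have inner: "ennreal (c * G d x) \<le> (\<integral>\<^sup>+z. ennreal (G z x) \<partial>M i)" for x
    proof -
      have A: "(\<integral>\<^sup>+z. ennreal (G d x * w z) \<partial>M i) \<le> (\<integral>\<^sup>+z. ennreal (G z x) \<partial>M i)"
        using pw space[OF iin] by (intro nn_integral_mono ennreal_leI) auto
      have B: "(\<integral>\<^sup>+z. ennreal (G d x * w z) \<partial>M i) = ennreal (G d x * (\<integral>z. w z \<partial>M i))"
      proof -
        have "\<And>z. 0 \<le> w z" unfolding w_def using e01 by (simp add: add_nonneg_nonneg)
        hence "(\<integral>\<^sup>+z. ennreal (G d x * w z) \<partial>M i) = ennreal (\<integral>z. G d x * w z \<partial>M i)"
          using wint Gpos[of d x] by (intro nn_integral_eq_integral) (auto simp: less_imp_le)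
        thus ?thesis by simp
      qed
      have "c * G d x \<le> G d x * (\<integral>z. w z \<partial>M i)"
        using wc Gpos[of d x] by (simp add: mult.commute)
      hence "ennreal (c * G d x) \<le> ennreal (G d x * (\<integral>z. w z \<partial>M i))" by (rule ennreal_leI)
      also note B[symmetric]
      also note A
      finally show ?thesis .
    qed
    have "ennreal (marginal_density n k M h b y) = (\<integral>\<^sup>+x. ennreal (F x) \<partial>PiM {1..n} M')"
      unfolding marg_eq using Fint Fpos by (intro nn_integral_eq_integral[symmetric]) (auto simp: less_imp_le)
    also have "\<dots> = (\<integral>\<^sup>+x. (\<integral>\<^sup>+z. ennreal (F (x(i := z))) \<partial>M' i) \<partial>PiM I M')"
      unfolding ins[symmetric] using Fmeas ins
      by (intro PS.product_nn_integral_insert fin iI) auto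
    also have "\<dots> = (\<integral>\<^sup>+x. (\<integral>\<^sup>+z. ennreal (G z x) \<partial>M i) \<partial>PiM I M')"
    proof (intro nn_integral_cong)
      fix x assume x: "x \<in> space (PiM I M')"
      have "\<And>z. F (x(i := z)) = G z x"
        unfolding F_def G_def S_def
      proof (intro prod.cong refl arg_cong[where f=L])
        fix z j
        have "(\<Sum>i'\<in>{1..n}. h j ((x(i := z)) i')) = h j z + (\<Sum>i'\<in>I. h j ((x(i := z)) i'))"
          unfolding ins[symmetric] using fin iI by simp
        also have "(\<Sum>i'\<in>I. h j ((x(i := z)) i')) = (\<Sum>i'\<in>I. h j (x i'))"
          using iI by (intro sum.cong) auto
        finally show "y j - (\<Sum>i'\<in>{1..n}. h j ((x(i := z)) i')) = y j - (h j z + (\<Sum>i'\<in>I. h j (x i')))"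
          by simp
      qed
      thus "(\<integral>\<^sup>+z. ennreal (F (x(i := z))) \<partial>M' i) = (\<integral>\<^sup>+z. ennreal (G z x) \<partial>M i)"
        by (simp add: Mi)
    qed
    also have "\<dots> \<ge> (\<integral>\<^sup>+x. ennreal (c * G d x) \<partial>PiM I M')"
      using inner by (intro nn_integral_mono) auto
    also have "(\<integral>\<^sup>+x. ennreal (c * G d x) \<partial>PiM I M') = ennreal (\<integral>x. c * G d x \<partial>PiM I M')"
      using Gint Gpos cpos by (intro nn_integral_eq_integral) (auto simp: less_imp_le)
    also have "\<dots> = ennreal (c * cond_density n k M h b i y d)" unfolding cond_eq by simp
    finally have "ennreal (c * cond_density n k M h b i y d) \<le> ennreal (marginal_density n k M h b y)" .
    moreover have "0 \<le> marginal_density n k M h b y"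
      unfolding marg_eq using Fpos by (intro Bochner_Integration.integral_nonneg) (auto simp: less_imp_le)
    ultimately show ?thesis by (simp add: ennreal_le_iff)
  qed
  have Dne: "D \<noteq> {}" using Pi.not_empty space[OF iin] by simp
  then obtain d0 where d0: "d0 \<in> D" by blast
  define r where "r d = cond_density n k M h b i y d / marginal_density n k M h b y" for d
  have margpos: "marginal_density n k M h b y > 0"
  proof -
    have "c * cond_density n k M h b i y d0 > 0" using cond_pos[OF d0] Cp cpos by simp
    thus ?thesis using key[OF d0] by linarith
  qed
  have rle: "r d \<le> 1 / c" if "d \<in> D" for d
    using key[OF that] margpos cpos unfolding r_def by (simp add: divide_simps mult.commute)
  have r0: "r d0 > 0" unfolding r_def using margpos cond_pos[OF d0] Cp by simp
  have bdd: "bdd_above (r ` D)" using rle by (intro bdd_aboveI) auto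
  have SUPpos: "(SUP d\<in>D. r d) > 0"
    using cSUP_upper[OF d0 bdd] r0 by linarith
  have SUPle: "(SUP d\<in>D. r d) \<le> 1 / c" using Dne rle by (intro cSUP_least) auto
  have "pml_leakage n k M h b D i y = ln (SUP d\<in>D. r d)" unfolding pml_leakage_def r_def by simp
  also have "\<dots> \<le> ln (1 / c)" using SUPpos SUPle by (meson ln_le_cancel_iff less_le_trans)
  also have "ln (1 / c) = 2 / b - ln (1 - \<alpha> + \<alpha> * exp (2 / b))"
  proof -
    have q: "1 - \<alpha> + \<alpha> * exp (2 / b) > 0"
    proof -
      have "exp (2 / b) > 1" using bpos by simp
      hence "\<alpha> * exp (2 / b) > \<alpha> * 1" using alpha by (intro mult_strict_left_mono) auto
      thus ?thesis by simp
    qed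
    have "e * exp (2 / b) = 1" unfolding e_def by (simp add: exp_add[symmetric])
    hence "c = e * (1 - \<alpha> + \<alpha> * exp (2 / b))" unfolding c_def by (simp add: algebra_simps)
    hence "ln c = ln e + ln (1 - \<alpha> + \<alpha> * exp (2 / b))" using e01 q by (simp add: ln_mult)
    thus ?thesis using cpos by (simp add: ln_div e_def)
  qed
  finally show ?thesis .
qed

end
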